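(* The local homeomorphism $f:D\to Y$ is a homeomorphism of $D$ onto $Y$ if and only if the auxiliary flow $\Phi$ is a global dynamical system, i.e. $D_\Phi=D\times\mathbb R$.
   Context: Standing setting: $X,Y$ are real Banach spaces, $D\subseteq X$ is a nonempty open connected set, $f:D\to Y$ is a local homeomorphism (every point has an open neighbourhood mapped homeomorphically onto an open set), $x_0\in D$, $y_0=f(x_0)$. A flow in $D$ is a map $\Phi:D_\Phi\to D$ such that: (i) $D_\Phi$ is an open subset of $D\times\mathbb R$ and $\Phi$ is continuous; (ii) for each $x\in D$, $\{t:(x,t)\in D_\Phi\}$ is an interval containing $0$; (iii) $\Phi(x,0)=x$; (iv) if $(x,t_1),(x,t_1+t_2)\in D_\Phi$ then $(\Phi(x,t_1),t_2)\in D_\Phi$ and $\Phi(\Phi(x,t_1),t_2)=\Phi(x,t_1+t_2)$. Let $\Psi(y,t)=y_0+e^{-t}(y-y_0)$ for $y\in Y,t\in\mathbb R$. The auxiliary flow $\Phi$ is the unique flow in $D$ of maximal domain with $f(\Phi(x,t))=\Psi(f(x),t)$ for all $(x,t)\in D_\Phi$; for each $x$, $t\mapsto\Phi(x,t)$ is the maximal continuous lifting by $f$ of $t\mapsto\Psi(f(x),t)$ through $x$ at $t=0$. *)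

theory Defs
  imports "HOL-Analysis.Analysis"
begin

definition local_homeomorphism_on :: "'a::topological_space set \<Rightarrow> ('a \<Rightarrow> 'b::topological_space) \<Rightarrow> bool" where
  "local_homeomorphism_on D f \<longleftrightarrow>
     (\<forall>x\<in>D. \<exists>U g. open U \<and> x \<in> U \<and> U \<subseteq> D \<and> open (f ` U) \<and> homeomorphism U (f ` U) f g)"

definition Psi :: "'b::real_normed_vector \<Rightarrow> 'b \<Rightarrow> real \<Rightarrow> 'b" where
  "Psi y0 y t = y0 + exp (- t) *\<^sub>R (y - y0)"

definition is_lifting ::
  "'a::topological_space set \<Rightarrow> ('a \<Rightarrow> 'b) \<Rightarrow> (real \<Rightarrow> 'b) \<Rightarrow> 'a \<Rightarrow> real set \<Rightarrow> (real \<Rightarrow> 'a) \<Rightarrow> bool" where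
  "is_lifting D f c x J \<gamma> \<longleftrightarrow>
     is_interval J \<and> 0 \<in> J \<and> continuous_on J \<gamma> \<and> \<gamma> ` J \<subseteq> D \<and> \<gamma> 0 = x \<and>
     (\<forall>t\<in>J. f (\<gamma> t) = c t)"

text \<open>Domain D_Phi of the auxiliary flow: for each x in D, the set of times t lies in the
  maximal interval of existence of the continuous lifting of t \<mapsto> Psi(f x, t) through x,
  i.e. the union of the domains of all such liftings.\<close>
definition aux_flow_domain :: "'a::topological_space set \<Rightarrow> ('a \<Rightarrow> 'b::real_normed_vector) \<Rightarrow> 'b \<Rightarrow> ('a \<times> real) set" where
  "aux_flow_domain D f y0 =
     {(x, t). x \<in> D \<and> (\<exists>J \<gamma>. is_lifting D f (Psi y0 (f x)) x J \<gamma> \<and> t \<in> J)}"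

end

theory Submission
  imports Defs
begin


locale lh =
  fixes D :: "'a::real_normed_vector set" and f :: "'a \<Rightarrow> 'b::real_normed_vector"
  assumes openD: "open D" and lhf: "local_homeomorphism_on D f"
begin

lemma chart:
  assumes "x \<in> D"
  obtains U g where "open U" "x \<in> U" "U \<subseteq> D" "open (f ` U)" "homeomorphism U (f ` U) f g"
  using lhf assms unfolding local_homeomorphism_on_def by blast

lemma cont_f: "continuous_on D f"
proof -
  have "isCont f x" if xD: "x \<in> D" for x
  proof -
    obtain U g where U: "open U" "x \<in> U" "U \<subseteq> D" "open (f ` U)" "homeomorphism U (f ` U) f g"
      using xD by (rule chart)
    then have "continuous_on U f" by (simp add: homeomorphism_def)
    moreover have "x \<in> interior U" using U(1,2) by (simp add: interior_open)
    ultimately show ?thesis by (rule continuous_on_interior)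
  qed
  then show ?thesis by (simp add: continuous_at_imp_continuous_on)
qed

lemma uniq:
  assumes I: "connected I" and c1: "continuous_on I \<gamma>1" and c2: "continuous_on I \<gamma>2"
    and d1: "\<gamma>1 ` I \<subseteq> D" and d2: "\<gamma>2 ` I \<subseteq> D"
    and ff: "\<And>t. t \<in> I \<Longrightarrow> f (\<gamma>1 t) = f (\<gamma>2 t)"
    and t0: "t0 \<in> I" "\<gamma>1 t0 = \<gamma>2 t0" and t: "t \<in> I"
  shows "\<gamma>1 t = \<gamma>2 t"
proof -
  let ?E = "{s \<in> I. \<gamma>1 s - \<gamma>2 s = 0}"
  have cl: "closedin (top_of_set I) ?E"
    by (intro continuous_closedin_preimage_constant continuous_on_diff c1 c2)
  have op: "openin (top_of_set I) ?E"
  proof (rule openin_subopen[THEN iffD2], intro ballI)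
    fix s assume s: "s \<in> ?E"
    then have sI: "s \<in> I" and eq: "\<gamma>1 s = \<gamma>2 s" by simp_all
    have "\<gamma>1 s \<in> D" using d1 sI by blast
    then obtain U g where U: "open U" "\<gamma>1 s \<in> U" "U \<subseteq> D" "open (f ` U)" "homeomorphism U (f ` U) f g"
      by (rule chart)
    let ?S = "(I \<inter> \<gamma>1 -` U) \<inter> (I \<inter> \<gamma>2 -` U)"
    have "openin (top_of_set I) (I \<inter> \<gamma>1 -` U)"
      using continuous_openin_preimage_gen[OF c1 \<open>open U\<close>] .
    moreover have "openin (top_of_set I) (I \<inter> \<gamma>2 -` U)"
      using continuous_openin_preimage_gen[OF c2 \<open>open U\<close>] .
    ultimately have "openin (top_of_set I) ?S" by (rule openin_Int)
    moreover have "s \<in> ?S" using sI eq U(2) by simp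
    moreover have "?S \<subseteq> ?E"
    proof
      fix r assume r: "r \<in> ?S"
      have "g (f (\<gamma>1 r)) = \<gamma>1 r" "g (f (\<gamma>2 r)) = \<gamma>2 r"
        using U(5) r unfolding homeomorphism_def by simp_all
      moreover have "f (\<gamma>1 r) = f (\<gamma>2 r)" using ff r by simp
      ultimately have "\<gamma>1 r = \<gamma>2 r" by metis
      then show "r \<in> ?E" using r by simp
    qed
    ultimately show "\<exists>T. openin (top_of_set I) T \<and> s \<in> T \<and> T \<subseteq> ?E" by (intro exI[of _ ?S]) simp
  qed
  have "?E \<noteq> {}" using t0 by auto
  then have "?E = I" using connected_clopen[THEN iffD1, OF I, rule_format, of ?E] cl op by auto
  then show ?thesis using t by auto
qed

lemma glue:
  assumes x: "x \<in> D" and all: "\<And>t. \<exists>J \<gamma>. is_lifting D f c x J \<gamma> \<and> t \<in> J"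
  shows "\<exists>\<gamma>. is_lifting D f c x UNIV \<gamma>"
proof -
  define G where "G t = (SOME z. \<exists>J \<gamma>. is_lifting D f c x J \<gamma> \<and> t \<in> J \<and> \<gamma> t = z)" for t
  have G: "G t = \<gamma> t" if L: "is_lifting D f c x J \<gamma>" and tJ: "t \<in> J" for J \<gamma> t
  proof -
    have "\<exists>z. \<exists>J \<gamma>. is_lifting D f c x J \<gamma> \<and> t \<in> J \<and> \<gamma> t = z" using L tJ by blast
    then have "\<exists>J' \<gamma>'. is_lifting D f c x J' \<gamma>' \<and> t \<in> J' \<and> \<gamma>' t = G t"
      unfolding G_def by (rule someI_ex)
    then obtain J' \<gamma>' where L': "is_lifting D f c x J' \<gamma>'" "t \<in> J'" "\<gamma>' t = G t"
      by blast
    have ii: "is_interval (J \<inter> J')" using L L' by (simp add: is_lifting_def is_interval_Int)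
    show ?thesis
    proof -
      have LL: "continuous_on J \<gamma>" "\<gamma> ` J \<subseteq> D" "\<gamma> 0 = x" "\<forall>t\<in>J. f (\<gamma> t) = c t" "0 \<in> J"
        using L unfolding is_lifting_def by auto
      have LL': "continuous_on J' \<gamma>'" "\<gamma>' ` J' \<subseteq> D" "\<gamma>' 0 = x" "\<forall>t\<in>J'. f (\<gamma>' t) = c t" "0 \<in> J'"
        using L'(1) unfolding is_lifting_def by auto
      have "\<gamma> t = \<gamma>' t"
      proof (rule uniq[of "J \<inter> J'" \<gamma> \<gamma>' 0])
        show "connected (J \<inter> J')" using ii is_interval_connected by blast
        show "continuous_on (J \<inter> J') \<gamma>" using LL(1) by (rule continuous_on_subset) blast
        show "continuous_on (J \<inter> J') \<gamma>'" using LL'(1) by (rule continuous_on_subset) blast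
        show "\<gamma> ` (J \<inter> J') \<subseteq> D" using LL(2) by blast
        show "\<gamma>' ` (J \<inter> J') \<subseteq> D" using LL'(2) by blast
        show "f (\<gamma> s) = f (\<gamma>' s)" if "s \<in> J \<inter> J'" for s using that LL(4) LL'(4) by simp
        show "0 \<in> J \<inter> J'" using LL(5) LL'(5) by simp
        show "\<gamma> 0 = \<gamma>' 0" using LL(3) LL'(3) by simp
        show "t \<in> J \<inter> J'" using tJ L'(2) by simp
      qed
      then show ?thesis using L' by simp
    qed
  qed
  have cb: "continuous_on {-b..b} G" if b: "b > 0" for b :: real
  proof -
    obtain J1 \<gamma>1 where L1: "is_lifting D f c x J1 \<gamma>1" "b \<in> J1" using all[of b] by blast
    obtain J2 \<gamma>2 where L2: "is_lifting D f c x J2 \<gamma>2" "-b \<in> J2" using all[of "-b"] by blast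
    have s1: "{0..b} \<subseteq> J1"
    proof
      fix s assume s: "s \<in> {0..b}"
      have "is_interval J1" "0 \<in> J1" using L1(1) by (simp_all add: is_lifting_def)
      then show "s \<in> J1" using mem_is_interval_1_I[of J1 0 b s] L1(2) s by simp
    qed
    have s2: "{-b..0} \<subseteq> J2"
    proof
      fix s assume s: "s \<in> {-b..0}"
      have "is_interval J2" "0 \<in> J2" using L2(1) by (simp_all add: is_lifting_def)
      then show "s \<in> J2" using mem_is_interval_1_I[of J2 "-b" 0 s] L2(2) s by simp
    qed
    have c1: "continuous_on {0..b} \<gamma>1"
      by (rule continuous_on_subset[OF _ s1]) (use L1(1) in \<open>simp add: is_lifting_def\<close>)
    have e1: "\<gamma>1 s = G s" if "s \<in> {0..b}" for s
    proof -
      have "s \<in> J1" using that s1 by (rule subsetD[rotated])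
      then show ?thesis using G[OF L1(1)] by simp
    qed
    have c2: "continuous_on {-b..0} \<gamma>2"
      by (rule continuous_on_subset[OF _ s2]) (use L2(1) in \<open>simp add: is_lifting_def\<close>)
    have e2: "\<gamma>2 s = G s" if "s \<in> {-b..0}" for s
    proof -
      have "s \<in> J2" using that s2 by (rule subsetD[rotated])
      then show ?thesis using G[OF L2(1)] by simp
    qed
    have "continuous_on {-b..0} G" using c2 e2 by (rule continuous_on_eq)
    moreover have "continuous_on {0..b} G" using c1 e1 by (rule continuous_on_eq)
    ultimately have "continuous_on ({-b..0} \<union> {0..b}) G"
      by (intro continuous_on_closed_Un) auto
    moreover have "{-b..0} \<union> {0..b} = {-b..b}" using b by auto
    ultimately show ?thesis by simp
  qed
  have "isCont G t" for t
  proof -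
    have "continuous_on {-(\<bar>t\<bar>+1)..\<bar>t\<bar>+1} G" by (rule cb) auto
    moreover have "t \<in> interior {-(\<bar>t\<bar>+1)..\<bar>t\<bar>+1}" by auto
    ultimately show ?thesis using continuous_on_interior by blast
  qed
  then have "continuous_on UNIV G" by (simp add: continuous_at_imp_continuous_on)
  moreover have "G t \<in> D \<and> f (G t) = c t" for t
  proof -
    obtain J \<gamma> where L: "is_lifting D f c x J \<gamma>" "t \<in> J" using all[of t] by blast
    then show ?thesis using G[OF L] by (auto simp: is_lifting_def)
  qed
  moreover have "G 0 = x"
  proof -
    obtain J \<gamma> where L: "is_lifting D f c x J \<gamma>" "0 \<in> J" using all[of 0] by blast
    then show ?thesis using G[OF L] by (auto simp: is_lifting_def)
  qed
  ultimately have "is_lifting D f c x UNIV G"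
    by (auto simp: is_lifting_def)
  then show ?thesis by blast
qed

end



lemma Psi_dist: "dist (Psi y0 a t) (Psi y0 b t) = exp (-t) * dist a b"
proof -
  have "Psi y0 a t - Psi y0 b t = exp (-t) *\<^sub>R (a - b)" by (simp add: Psi_def algebra_simps)
  then show ?thesis by (simp add: dist_norm)
qed

lemma Psi_dist0: "dist (Psi y0 a t) y0 = exp (-t) * dist a y0"
proof -
  have "Psi y0 a t - y0 = exp (-t) *\<^sub>R (a - y0)" by (simp add: Psi_def algebra_simps)
  then show ?thesis by (simp add: dist_norm)
qed

lemma Psi_cont: "continuous_on A (Psi y0 a)"
  unfolding Psi_def by (intro continuous_intros)

lemma Psi_0[simp]: "Psi y0 a 0 = a" by (simp add: Psi_def)

locale fl = lh D f for D :: "'a::real_normed_vector set" and f :: "'a \<Rightarrow> 'b::real_normed_vector" +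
  fixes y0 :: 'b
  assumes glob: "\<And>x. x \<in> D \<Longrightarrow> \<exists>\<gamma>. is_lifting D f (Psi y0 (f x)) x UNIV \<gamma>"
begin

definition Gm where "Gm x = (SOME \<gamma>. is_lifting D f (Psi y0 (f x)) x UNIV \<gamma>)"

lemma Gl: assumes "x \<in> D" shows "is_lifting D f (Psi y0 (f x)) x UNIV (Gm x)"
  unfolding Gm_def using glob[OF assms] by (rule someI_ex)

lemma Gc: "x \<in> D \<Longrightarrow> continuous_on UNIV (Gm x)"
  using Gl[of x] by (simp add: is_lifting_def)
lemma GD: "x \<in> D \<Longrightarrow> Gm x t \<in> D"
  using Gl[of x] by (auto simp: is_lifting_def)
lemma G0: "x \<in> D \<Longrightarrow> Gm x 0 = x"
  using Gl[of x] by (simp add: is_lifting_def)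
lemma Gf: "x \<in> D \<Longrightarrow> f (Gm x t) = Psi y0 (f x) t"
  using Gl[of x] by (simp add: is_lifting_def)

lemma Gu:
  assumes x: "x \<in> D" and I: "connected I" and c: "continuous_on I \<gamma>" and d: "\<gamma> ` I \<subseteq> D"
    and ff: "\<And>t. t \<in> I \<Longrightarrow> f (\<gamma> t) = Psi y0 (f x) t"
    and t0: "t0 \<in> I" "\<gamma> t0 = Gm x t0" and t: "t \<in> I"
  shows "Gm x t = \<gamma> t"
proof (rule uniq[OF I _ c _ d _ t0(1) _ t])
  show "continuous_on I (Gm x)" using Gc[OF x] by (rule continuous_on_subset) simp
  show "Gm x ` I \<subseteq> D" using GD[OF x] by blast
  show "f (Gm x s) = f (\<gamma> s)" if "s \<in> I" for s using ff[OF that] Gf[OF x] by simp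
  show "Gm x t0 = \<gamma> t0" using t0(2) by simp
qed

lemma chart_lift:
  assumes x: "x \<in> D" and UD: "U \<subseteq> D" and h: "homeomorphism U (f ` U) f g"
    and I: "connected I" and pU: "\<And>\<tau>. \<tau> \<in> I \<Longrightarrow> Psi y0 (f x) \<tau> \<in> f ` U"
    and t0: "t0 \<in> I" "Gm x t0 \<in> U" and t: "t \<in> I"
  shows "Gm x t = g (Psi y0 (f x) t)"
proof (rule Gu[OF x I _ _ _ t0(1) _ t])
  have h1: "\<forall>u\<in>U. g (f u) = u" and h2: "\<forall>y\<in>f ` U. f (g y) = y" and h3: "g ` f ` U = U"
    and h4: "continuous_on (f ` U) g"
    using h unfolding homeomorphism_def by auto
  show "continuous_on I (\<lambda>\<tau>. g (Psi y0 (f x) \<tau>))"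
    by (rule continuous_on_compose2[OF h4 Psi_cont]) (use pU in blast)
  show "(\<lambda>\<tau>. g (Psi y0 (f x) \<tau>)) ` I \<subseteq> D"
  proof
    fix z assume "z \<in> (\<lambda>\<tau>. g (Psi y0 (f x) \<tau>)) ` I"
    then obtain \<tau> where "\<tau> \<in> I" "z = g (Psi y0 (f x) \<tau>)" by blast
    then have "z \<in> g ` f ` U" using pU by blast
    then show "z \<in> D" using h3 UD by blast
  qed
  show "f (g (Psi y0 (f x) \<tau>)) = Psi y0 (f x) \<tau>" if "\<tau> \<in> I" for \<tau>
    using h2 pU[OF that] by blast
  have "g (Psi y0 (f x) t0) = g (f (Gm x t0))" using Gf[OF x] by simp
  also have "\<dots> = Gm x t0" using h1 t0(2) by blast
  finally show "g (Psi y0 (f x) t0) = Gm x t0" .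
qed

end



context fl begin

lemma cont_param:
  assumes x: "x \<in> D"
  shows "\<forall>W. open W \<and> Gm x T \<in> W \<longrightarrow> (\<exists>N. open N \<and> x \<in> N \<and> (\<forall>x'\<in>N \<inter> D. Gm x' T \<in> W))"
proof -
  define S where "S = {T. \<forall>W. open W \<and> Gm x T \<in> W \<longrightarrow> (\<exists>N. open N \<and> x \<in> N \<and> (\<forall>x'\<in>N \<inter> D. Gm x' T \<in> W))}"
  have key: "\<exists>\<delta>>0. \<forall>T'\<in>S. dist T' T < \<delta> \<longrightarrow> ball T \<delta> \<subseteq> S" for T
  proof -
    let ?p = "Psi y0 (f x)"
    define c where "c = Gm x T"
    have cD: "c \<in> D" unfolding c_def by (rule GD[OF x])
    then obtain U g where U: "open U" "c \<in> U" "U \<subseteq> D" "open (f ` U)" "homeomorphism U (f ` U) f g"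
      by (rule chart)
    have h1: "\<forall>u\<in>U. g (f u) = u" and h2: "\<forall>y\<in>f ` U. f (g y) = y" and h3: "g ` f ` U = U"
      and h4: "continuous_on (f ` U) g" and h5: "continuous_on U f"
      using U(5) unfolding homeomorphism_def by auto
    have fc: "f c = ?p T" unfolding c_def by (rule Gf[OF x])
    have y1: "?p T \<in> f ` U" using fc U(2) by (metis imageI)
    have "\<exists>\<rho>>0. ball (?p T) \<rho> \<subseteq> f ` U"
      using open_contains_ball[THEN iffD1, OF U(4), rule_format, OF y1] .
    then obtain \<rho> where \<rho>: "\<rho> > 0" "ball (?p T) \<rho> \<subseteq> f ` U" by blast
    have "\<forall>x\<in>UNIV. \<forall>\<epsilon>>0. \<exists>\<delta>>0. \<forall>x'\<in>UNIV. dist x' x < \<delta> \<longrightarrow> dist (?p x') (?p x) < \<epsilon>"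
      using Psi_cont[of UNIV y0 "f x"] unfolding continuous_on_iff .
    then have A: "\<forall>\<epsilon>>0. \<exists>\<delta>>0. \<forall>x'\<in>UNIV. dist x' T < \<delta> \<longrightarrow> dist (?p x') (?p T) < \<epsilon>"
      by (rule bspec) (rule UNIV_I)
    have "\<rho>/2 > 0" using \<rho>(1) by simp
    then have "\<exists>d>0. \<forall>s\<in>UNIV. dist s T < d \<longrightarrow> dist (?p s) (?p T) < \<rho>/2"
      by (rule A[rule_format])
    then obtain d where d: "d > 0" "\<And>s. dist s T < d \<Longrightarrow> dist (?p s) (?p T) < \<rho>/2"
      by blast
    define \<delta> where "\<delta> = min (d/2) 1"
    have \<delta>: "\<delta> > 0" "2*\<delta> \<le> d" "\<delta> \<le> 1" using d(1) unfolding \<delta>_def by auto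
    show ?thesis
    proof (intro exI[of _ \<delta>] conjI \<delta>(1) ballI impI subsetI)
      fix T' s assume T'S: "T' \<in> S" and dT': "dist T' T < \<delta>" and s: "s \<in> ball T \<delta>"
      define I where "I = ball T (2*\<delta>)"
      have Ic: "connected I" unfolding I_def by simp
      have TI: "T \<in> I" and sI: "s \<in> I" and T'I: "T' \<in> I"
        using \<delta>(1) s dT' unfolding I_def by (auto simp: dist_commute)
      have pI: "dist (?p \<tau>) (?p T) < \<rho>/2" if "\<tau> \<in> I" for \<tau>
        using that \<delta>(2) d(2)[of \<tau>] unfolding I_def by (simp add: dist_commute)
      have pU: "?p \<tau> \<in> f ` U" if "\<tau> \<in> I" for \<tau>
      proof -
        have "?p \<tau> \<in> ball (?p T) \<rho>" using pI[OF that] \<rho>(1) by (simp add: dist_commute)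
        then show ?thesis using \<rho>(2) by blast
      qed
      have cU: "Gm x T \<in> U" using U(2) unfolding c_def .
      have gx: "Gm x \<tau> = g (?p \<tau>)" if "\<tau> \<in> I" for \<tau>
        by (rule chart_lift[OF x U(3) U(5) Ic pU TI cU that])
      show "s \<in> S" unfolding S_def
      proof (intro CollectI allI impI, elim conjE)
        fix W assume oW: "open W" and sW: "Gm x s \<in> W"
        define q where "q = ?p s"
        have qU: "q \<in> f ` U" unfolding q_def by (rule pU[OF sI])
        have gq: "g q \<in> W" using sW gx[OF sI] unfolding q_def by simp
        have "\<exists>\<epsilon>>0. ball (g q) \<epsilon> \<subseteq> W"
          using open_contains_ball[THEN iffD1, OF oW, rule_format, OF gq] .
        then obtain \<epsilon> where \<epsilon>: "\<epsilon> > 0" "ball (g q) \<epsilon> \<subseteq> W" by blast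
        have "\<forall>x\<in>f ` U. \<forall>\<epsilon>>0. \<exists>\<delta>>0. \<forall>x'\<in>f ` U. dist x' x < \<delta> \<longrightarrow> dist (g x') (g x) < \<epsilon>"
          using h4 unfolding continuous_on_iff .
        then have C: "\<forall>\<epsilon>>0. \<exists>\<delta>>0. \<forall>x'\<in>f ` U. dist x' q < \<delta> \<longrightarrow> dist (g x') (g q) < \<epsilon>"
          using qU by (rule bspec)
        have "\<exists>\<eta>1>0. \<forall>y\<in>f ` U. dist y q < \<eta>1 \<longrightarrow> dist (g y) (g q) < \<epsilon>"
          using C[rule_format, OF \<epsilon>(1)] .
        then obtain \<eta>1 where \<eta>1: "\<eta>1 > 0" "\<And>y. y \<in> f ` U \<Longrightarrow> dist y q < \<eta>1 \<Longrightarrow> dist (g y) (g q) < \<epsilon>"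
          by blast
        define m where "m = min \<eta>1 (\<rho>/2)"
        have m: "m > 0" "m \<le> \<eta>1" "m \<le> \<rho>/2" using \<eta>1(1) \<rho>(1) unfolding m_def by auto
        define \<eta> where "\<eta> = m / exp 3"
        have \<eta>: "\<eta> > 0" "exp 3 * \<eta> = m" unfolding \<eta>_def using m(1) by auto
        define W' where "W' = f -` ball (f (Gm x T')) \<eta> \<inter> U"
        have oW': "open W'" unfolding W'_def
          using continuous_on_open_vimage[OF U(1), THEN iffD1, OF h5, rule_format, of "ball (f (Gm x T')) \<eta>"] by simp
        have GT'U: "Gm x T' \<in> U"
        proof -
          have "g (?p T') \<in> g ` f ` U" using pU[OF T'I] by blast
          then show ?thesis using gx[OF T'I] h3 by simp
        qed
        have GW': "Gm x T' \<in> W'" unfolding W'_def using GT'U \<eta>(1) by simp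
        have "\<forall>W. open W \<and> Gm x T' \<in> W \<longrightarrow> (\<exists>N. open N \<and> x \<in> N \<and> (\<forall>x'\<in>N \<inter> D. Gm x' T' \<in> W))"
          using T'S unfolding S_def by (rule CollectD)
        then have "\<exists>N. open N \<and> x \<in> N \<and> (\<forall>x'\<in>N \<inter> D. Gm x' T' \<in> W')"
          using oW' GW' by blast
        then obtain N where N: "open N" "x \<in> N" "\<And>x'. x' \<in> N \<inter> D \<Longrightarrow> Gm x' T' \<in> W'"
          by blast
        show "\<exists>N. open N \<and> x \<in> N \<and> (\<forall>x'\<in>N \<inter> D. Gm x' s \<in> W)"
        proof (intro exI[of _ N] conjI N(1,2) ballI)
          fix x' assume x'ND: "x' \<in> N \<inter> D"
          then have x': "x' \<in> D" by simp
          let ?p' = "Psi y0 (f x')"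
          have a1: "Gm x' T' \<in> U" and a2: "dist (f (Gm x' T')) (f (Gm x T')) < \<eta>"
            using N(3)[OF x'ND] unfolding W'_def by (auto simp: dist_commute)
          have a3: "dist (?p' T') (?p T') < \<eta>" using a2 Gf[OF x'] Gf[OF x] by simp
          have close: "dist (?p' \<tau>) (?p \<tau>) < m" if "\<tau> \<in> I" for \<tau>
          proof -
            have "T' - \<tau> \<le> 3"
            proof -
              have "dist \<tau> T < 2*\<delta>" using that unfolding I_def by (simp add: dist_commute)
              then show ?thesis using dT' \<delta>(3) by (simp add: dist_real_def)
            qed
            then have e3: "exp (T' - \<tau>) \<le> exp 3" by simp
            have "dist (?p' \<tau>) (?p \<tau>) = exp (-\<tau>) * dist (f x') (f x)" by (rule Psi_dist)
            also have "\<dots> = exp (T' - \<tau>) * (exp (-T') * dist (f x') (f x))"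
            proof -
              have "exp (T' - \<tau>) * exp (-T') = exp (-\<tau>)" by (simp add: mult_exp_exp)
              then show ?thesis by (metis mult.assoc)
            qed
            also have "\<dots> = exp (T' - \<tau>) * dist (?p' T') (?p T')" by (simp add: Psi_dist)
            also have "\<dots> \<le> exp 3 * dist (?p' T') (?p T')"
              using e3 by (simp add: mult_right_mono)
            also have "\<dots> < exp 3 * \<eta>" using a3 by simp
            finally show ?thesis using \<eta>(2) by simp
          qed
          have p'U: "?p' \<tau> \<in> f ` U" if "\<tau> \<in> I" for \<tau>
          proof -
            have "dist (?p T) (?p' \<tau>) \<le> dist (?p T) (?p \<tau>) + dist (?p \<tau>) (?p' \<tau>)"
              by (rule dist_triangle)
            also have "\<dots> < \<rho>/2 + \<rho>/2"
              using pI[OF that] close[OF that] m(3) by (simp add: dist_commute)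
            finally have "?p' \<tau> \<in> ball (?p T) \<rho>" by simp
            then show ?thesis using \<rho>(2) by blast
          qed
          have gx': "Gm x' s = g (?p' s)"
            by (rule chart_lift[OF x' U(3) U(5) Ic p'U T'I a1 sI])
          have "dist (?p' s) q < \<eta>1" using close[OF sI] m(2) unfolding q_def by simp
          then have "dist (g (?p' s)) (g q) < \<epsilon>" using \<eta>1(2) p'U[OF sI] by blast
          then have "g (?p' s) \<in> ball (g q) \<epsilon>" by (simp add: dist_commute)
          then show "Gm x' s \<in> W" using \<epsilon>(2) gx' by auto
        qed
      qed
    qed
  qed
  have S0: "0 \<in> S" unfolding S_def
  proof (intro CollectI allI impI, elim conjE)
    fix W assume "open W" "Gm x 0 \<in> W"
    then show "\<exists>N. open N \<and> x \<in> N \<and> (\<forall>x'\<in>N \<inter> D. Gm x' 0 \<in> W)"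
      using G0 x by (intro exI[of _ W]) auto
  qed
  have oS: "open S"
  proof (rule openI)
    fix T assume T: "T \<in> S"
    obtain \<delta> where \<delta>: "\<delta> > 0" "\<forall>T'\<in>S. dist T' T < \<delta> \<longrightarrow> ball T \<delta> \<subseteq> S" using key by blast
    have "ball T \<delta> \<subseteq> S" using \<delta>(2)[rule_format, OF T] \<delta>(1) by simp
    then show "\<exists>e>0. ball T e \<subseteq> S" using \<delta>(1) by blast
  qed
  have oS': "open (- S)"
  proof (rule openI)
    fix T assume T: "T \<in> - S"
    obtain \<delta> where \<delta>: "\<delta> > 0" "\<forall>T'\<in>S. dist T' T < \<delta> \<longrightarrow> ball T \<delta> \<subseteq> S" using key by blast
    have "ball T \<delta> \<subseteq> - S"
    proof
      fix T' assume "T' \<in> ball T \<delta>"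
      then have "dist T' T < \<delta>" by (simp add: dist_commute)
      show "T' \<in> - S"
      proof
        assume "T' \<in> S"
        then have "ball T \<delta> \<subseteq> S" using \<delta>(2) \<open>dist T' T < \<delta>\<close> by blast
        then have "T \<in> S" using \<delta>(1) by auto
        then show False using T by simp
      qed
    qed
    then show "\<exists>e>0. ball T e \<subseteq> - S" using \<delta>(1) by blast
  qed
  have "S \<inter> UNIV = {} \<or> (- S) \<inter> UNIV = {}"
    by (rule connectedD[OF connected_UNIV oS oS']) auto
  then have "S = UNIV" using S0 by auto
  then show ?thesis unfolding S_def by blast
qed

end



context fl begin

lemma homeo:
  assumes conn: "connected D" and x0: "x0 \<in> D" and y0: "y0 = f x0"
  shows "\<exists>h. homeomorphism D UNIV f h"
proof -
  obtain U0 g0 where U0: "open U0" "x0 \<in> U0" "U0 \<subseteq> D" "open (f ` U0)" "homeomorphism U0 (f ` U0) f g0"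
    using x0 by (rule chart)
  have k1: "\<forall>u\<in>U0. g0 (f u) = u" and k2: "\<forall>y\<in>f ` U0. f (g0 y) = y" and k3: "g0 ` f ` U0 = U0"
    and k4: "continuous_on (f ` U0) g0" and k5: "continuous_on U0 f"
    using U0(5) unfolding homeomorphism_def by auto
  have y0U: "y0 \<in> f ` U0" using U0(2) y0 by simp
  have "\<exists>r>0. ball y0 r \<subseteq> f ` U0"
    using open_contains_ball[THEN iffD1, OF U0(4), rule_format, OF y0U] .
  then obtain r where r: "r > 0" "ball y0 r \<subseteq> f ` U0" by blast
  define U' where "U' = f -` ball y0 r \<inter> U0"
  have oU': "open U'" unfolding U'_def
    using continuous_on_open_vimage[OF U0(1), THEN iffD1, OF k5, rule_format, of "ball y0 r"] by simp
  have U'1: "u \<in> U0" "f u \<in> ball y0 r" if "u \<in> U'" for u using that unfolding U'_def by simp_all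
  have U'2: "g0 y \<in> U'" if "y \<in> ball y0 r" for y
  proof -
    have yU: "y \<in> f ` U0" using that r(2) by blast
    have "g0 y \<in> g0 ` f ` U0" using yU by (rule imageI)
    then have "g0 y \<in> U0" using k3 by simp
    moreover have "f (g0 y) = y" using k2 yU by blast
    ultimately show ?thesis using that unfolding U'_def by simp
  qed
  have U'D: "u \<in> D" if "u \<in> U'" for u using U'1(1)[OF that] U0(3) by blast
  have fwd: "Gm x \<tau> = g0 (Psi y0 (f x) \<tau>) \<and> Gm x \<tau> \<in> U'"
    if x: "x \<in> D" and s: "Gm x s \<in> U'" and as: "a \<le> s" and pa: "Psi y0 (f x) a \<in> ball y0 r"
      and at: "a \<le> \<tau>" for x s a \<tau>
  proof -
    have pb: "Psi y0 (f x) \<tau>' \<in> ball y0 r" if "\<tau>' \<in> {a..}" for \<tau>'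
    proof -
      have "exp (-\<tau>') \<le> exp (-a)" using that by simp
      then have "exp (-\<tau>') * dist (f x) y0 \<le> exp (-a) * dist (f x) y0"
        by (simp add: mult_right_mono)
      also have "\<dots> < r" using pa Psi_dist0[of y0 "f x" a] by (simp add: dist_commute)
      finally show ?thesis using Psi_dist0[of y0 "f x" \<tau>'] by (simp add: dist_commute)
    qed
    have pU: "Psi y0 (f x) \<tau>' \<in> f ` U0" if "\<tau>' \<in> {a..}" for \<tau>'
      using pb[OF that] r(2) by blast
    have "Gm x \<tau> = g0 (Psi y0 (f x) \<tau>)"
      by (rule chart_lift[OF x U0(3) U0(5) connected_Ici pU _ U'1(1)[OF s]]) (use as at in simp_all)
    moreover have "g0 (Psi y0 (f x) \<tau>) \<in> U'" using U'2 pb at by simp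
    ultimately show ?thesis by simp
  qed
  define A where "A = {x \<in> D. \<exists>t. Gm x t \<in> U'}"
  have x0A: "x0 \<in> A"
  proof -
    have "Gm x0 0 = x0" using G0[OF x0] .
    moreover have "x0 \<in> U'" unfolding U'_def using U0(2) y0 r(1) by simp
    ultimately show ?thesis unfolding A_def using x0 by (metis (mono_tags, lifting) mem_Collect_eq)
  qed
  have cp: "\<exists>N. open N \<and> x \<in> N \<and> (\<forall>x'\<in>N \<inter> D. Gm x' t \<in> W)"
    if "x \<in> D" "open W" "Gm x t \<in> W" for x t W
    using cont_param[OF that(1), of t, rule_format, OF conjI[OF that(2,3)]] .
  have oA: "open A"
  proof (rule open_subopen[THEN iffD2], intro ballI)
    fix x assume "x \<in> A"
    then have xD: "x \<in> D" and "\<exists>t. Gm x t \<in> U'" unfolding A_def by simp_all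
    then obtain t where t: "Gm x t \<in> U'" by blast
    obtain N where N: "open N" "x \<in> N" "\<forall>x'\<in>N \<inter> D. Gm x' t \<in> U'"
      using cp[OF xD oU' t] by blast
    have "N \<inter> D \<subseteq> A"
    proof
      fix x' assume x': "x' \<in> N \<inter> D"
      then have "Gm x' t \<in> U'" using N(3) by blast
      then show "x' \<in> A" unfolding A_def using x' by auto
    qed
    moreover have "open (N \<inter> D)" using N(1) openD by (rule open_Int)
    moreover have "x \<in> N \<inter> D" using N(2) xD by simp
    ultimately show "\<exists>T. open T \<and> x \<in> T \<and> T \<subseteq> A" by blast
  qed
  have oB: "open (D - A)"
  proof (rule open_subopen[THEN iffD2], intro ballI)
    fix x assume xB: "x \<in> D - A"
    then have xD: "x \<in> D" and nA: "\<And>t. Gm x t \<notin> U'" unfolding A_def by auto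
    define d where "d = dist (f x) y0"
    define t where "t = d / r"
    have d0: "d \<ge> 0" unfolding d_def by simp
    have "d < r * exp t"
    proof -
      have "r * (1 + t) \<le> r * exp t" using r(1) exp_ge_add_one_self[of t] by simp
      moreover have "r * (1 + t) = r + d" unfolding t_def using r(1) by (simp add: field_simps)
      ultimately show ?thesis using r(1) by simp
    qed
    then have "exp (-t) * d < r" by (simp add: exp_minus field_simps)
    then have ptb: "Psi y0 (f x) t \<in> ball y0 r"
      using Psi_dist0[of y0 "f x" t] unfolding d_def by (simp add: dist_commute)
    define w where "w = Gm x t"
    have fw: "f w = Psi y0 (f x) t" unfolding w_def by (rule Gf[OF xD])
    have wU: "w \<notin> U'" unfolding w_def by (rule nA)
    define z where "z = g0 (f w)"
    have zU: "z \<in> U'" unfolding z_def using U'2 ptb fw by simp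
    have "w \<noteq> z" using wU zU by auto
    then have "\<exists>O1 O2. open O1 \<and> open O2 \<and> w \<in> O1 \<and> z \<in> O2 \<and> O1 \<inter> O2 = {}"
      by (rule hausdorff)
    then obtain O1 O2 where O: "open O1" "open O2" "w \<in> O1" "z \<in> O2" "O1 \<inter> O2 = {}"
      by blast
    have oV: "open (g0 -` O2 \<inter> f ` U0)"
      using continuous_on_open_vimage[OF U0(4), THEN iffD1, OF k4, rule_format, OF O(2)] .
    define W where "W = O1 \<inter> (f -` (ball y0 r \<inter> (g0 -` O2 \<inter> f ` U0)) \<inter> D)"
    have oW: "open W" unfolding W_def
    proof (rule open_Int[OF O(1)])
      show "open (f -` (ball y0 r \<inter> (g0 -` O2 \<inter> f ` U0)) \<inter> D)"
        using continuous_on_open_vimage[OF openD, THEN iffD1, OF cont_f, rule_format,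
            OF open_Int[OF open_ball oV]] .
    qed
    have w1: "f w \<in> ball y0 r" using ptb fw by simp
    have w2: "f w \<in> f ` U0" using w1 r(2) by blast
    have w3: "g0 (f w) \<in> O2" using O(4) unfolding z_def .
    have w4: "w \<in> D" unfolding w_def by (rule GD[OF xD])
    have wW: "w \<in> W" unfolding W_def using O(3) w1 w2 w3 w4 by simp
    have WU: "u \<notin> U'" if "u \<in> W" for u
    proof
      assume uU: "u \<in> U'"
      then have "g0 (f u) = u" using k1 U'1(1) by blast
      moreover have "g0 (f u) \<in> O2" using that unfolding W_def by simp
      moreover have "u \<in> O1" using that unfolding W_def by simp
      ultimately have "u \<in> O1 \<inter> O2" by simp
      then show False using O(5) by simp
    qed
    have Wb: "f u \<in> ball y0 r" if "u \<in> W" for u using that unfolding W_def by simp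
    have "\<exists>N. open N \<and> x \<in> N \<and> (\<forall>x'\<in>N \<inter> D. Gm x' t \<in> W)"
      using cp[OF xD oW wW[unfolded w_def]] .
    then obtain N where N: "open N" "x \<in> N" "\<forall>x'\<in>N \<inter> D. Gm x' t \<in> W"
      by blast
    have "N \<inter> D \<subseteq> D - A"
    proof
      fix x' assume x': "x' \<in> N \<inter> D"
      then have x'D: "x' \<in> D" by simp
      have GW: "Gm x' t \<in> W" using N(3) x' by blast
      show "x' \<in> D - A"
      proof
        show "x' \<in> D" by (rule x'D)
        show "x' \<notin> A"
        proof
          assume "x' \<in> A"
          then have "\<exists>s. Gm x' s \<in> U'" unfolding A_def by simp
          then obtain s where s: "Gm x' s \<in> U'" by blast
          have pa: "Psi y0 (f x') (min s t) \<in> ball y0 r"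
          proof (cases "s \<le> t")
            case True
            then show ?thesis using U'1(2)[OF s] Gf[OF x'D] by simp
          next
            case False
            then show ?thesis using Wb[OF GW] Gf[OF x'D] by simp
          qed
          have "Gm x' t \<in> U'" using fwd[OF x'D s min.cobounded1 pa min.cobounded2] by (rule conjunct2)
          then show False using WU[OF GW] by simp
        qed
      qed
    qed
    moreover have "open (N \<inter> D)" using N(1) openD by (rule open_Int)
    moreover have "x \<in> N \<inter> D" using N(2) xD by simp
    ultimately show "\<exists>T. open T \<and> x \<in> T \<and> T \<subseteq> D - A" by blast
  qed
  have "A \<inter> D = {} \<or> (D - A) \<inter> D = {}"
    by (rule connectedD[OF conn oA oB]) auto
  then have DA: "D \<subseteq> A" using x0A x0 by auto
  have inj: "a = b" if a: "a \<in> D" and b: "b \<in> D" and fab: "f a = f b" for a b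
  proof -
    have "a \<in> A" "b \<in> A" using DA a b by auto
    then obtain ta tb where ta: "Gm a ta \<in> U'" and tb: "Gm b tb \<in> U'" unfolding A_def by auto
    define t where "t = max ta tb"
    have pa: "Psi y0 (f a) ta \<in> ball y0 r" using U'1(2)[OF ta] Gf[OF a] by simp
    have pb: "Psi y0 (f b) tb \<in> ball y0 r" using U'1(2)[OF tb] Gf[OF b] by simp
    have e1: "Gm a t = g0 (Psi y0 (f a) t)" using fwd[OF a ta order_refl pa] unfolding t_def by simp
    have e2: "Gm b t = g0 (Psi y0 (f b) t)" using fwd[OF b tb order_refl pb] unfolding t_def by simp
    have "Gm a 0 = Gm b 0"
    proof (rule Gu[OF a connected_UNIV Gc[OF b]])
      show "Gm b ` UNIV \<subseteq> D" using GD[OF b] by blast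
      show "f (Gm b \<tau>) = Psi y0 (f a) \<tau>" for \<tau> using Gf[OF b] fab by simp
      show "Gm b t = Gm a t" using e1 e2 fab by simp
    qed simp_all
    then show ?thesis using G0[OF a] G0[OF b] by simp
  qed
  have surj: "\<exists>x\<in>D. f x = y" for y
  proof (cases "y = y0")
    case True
    then show ?thesis using x0 y0 by blast
  next
    case False
    define n where "n = norm (y - y0)"
    have n: "n > 0" using False unfolding n_def by simp
    define l where "l = r / (2 * n)"
    have l: "l > 0" unfolding l_def using n r(1) by simp
    define w where "w = y0 + l *\<^sub>R (y - y0)"
    have "dist y0 w = l * n" unfolding w_def n_def dist_norm using l by simp
    also have "\<dots> = r / 2" unfolding l_def using n by simp
    finally have "w \<in> ball y0 r" using r(1) by simp
    then have zU: "g0 w \<in> U'" by (rule U'2)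
    have fz: "f (g0 w) = w" using k2 r(2) \<open>w \<in> ball y0 r\<close> by blast
    have zD: "g0 w \<in> D" by (rule U'D[OF zU])
    have "f (Gm (g0 w) (ln l)) = Psi y0 w (ln l)" using Gf[OF zD] fz by simp
    also have "\<dots> = y0 + (inverse l * l) *\<^sub>R (y - y0)"
      unfolding Psi_def w_def using l by (simp add: exp_minus)
    also have "\<dots> = y" using l by simp
    finally show ?thesis using GD[OF zD] by blast
  qed
  have injD: "inj_on f D" by (rule inj_onI) (rule inj)
  have fD: "f ` D = UNIV"
  proof -
    have "y \<in> f ` D" for y
    proof -
      obtain x where "x \<in> D" "f x = y" using surj[of y] by blast
      then show ?thesis by (metis imageI)
    qed
    then show ?thesis by blast
  qed
  define h where "h = inv_into D f"
  have hf: "h (f x) = x" if "x \<in> D" for x unfolding h_def using injD that by simp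
  have fh: "f (h y) = y" for y unfolding h_def using fD f_inv_into_f[of y f D] by simp
  have hD: "h y \<in> D" for y unfolding h_def using fD inv_into_into[of y f D] by simp
  have "isCont h y" for y
  proof -
    obtain Ua ga where Ua: "open Ua" "h y \<in> Ua" "Ua \<subseteq> D" "open (f ` Ua)" "homeomorphism Ua (f ` Ua) f ga"
      using hD by (rule chart)
    have q2: "\<forall>y\<in>f ` Ua. f (ga y) = y" and q3: "ga ` f ` Ua = Ua" and q4: "continuous_on (f ` Ua) ga"
      using Ua(5) unfolding homeomorphism_def by auto
    have eq: "ga y' = h y'" if "y' \<in> f ` Ua" for y'
    proof -
      have "ga y' \<in> Ua" using q3 that by blast
      then have "ga y' \<in> D" using Ua(3) by blast
      moreover have "f (ga y') = y'" using q2 that by blast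
      then have "f (ga y') = f (h y')" using fh by simp
      ultimately show ?thesis using inj[OF _ hD, of "ga y'"] by simp
    qed
    have "continuous_on (f ` Ua) h" using q4 eq by (rule continuous_on_eq)
    moreover have "y \<in> interior (f ` Ua)"
    proof -
      have "y = f (h y)" using fh by simp
      then have "y \<in> f ` Ua" using Ua(2) by (metis imageI)
      then show ?thesis using Ua(4) by (simp add: interior_open)
    qed
    ultimately show ?thesis by (rule continuous_on_interior)
  qed
  then have "continuous_on UNIV h" by (simp add: continuous_at_imp_continuous_on)
  then have "homeomorphism D UNIV f h"
    by (intro homeomorphismI cont_f) (auto simp: hf fh hD)
  then show ?thesis by blast
qed

end


theorem proposition2p2:
  fixes f :: "'a::banach \<Rightarrow> 'b::banach" and D :: "'a set" and x0 :: 'a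
  assumes "open D" and "connected D" and "D \<noteq> {}"
    and "local_homeomorphism_on D f"
    and "x0 \<in> D"
  shows "(\<exists>g. homeomorphism D UNIV f g) \<longleftrightarrow> aux_flow_domain D f (f x0) = D \<times> UNIV"
proof
  assume "\<exists>g. homeomorphism D UNIV f g"
  then obtain g where hg: "homeomorphism D UNIV f g" by blast
  have g1: "\<forall>x\<in>D. g (f x) = x" and g2: "\<forall>y\<in>UNIV. f (g y) = y" and g3: "g ` UNIV = D"
    and g4: "continuous_on UNIV g"
    using hg unfolding homeomorphism_def by auto
  show "aux_flow_domain D f (f x0) = D \<times> UNIV"
  proof
    show "aux_flow_domain D f (f x0) \<subseteq> D \<times> UNIV"
      unfolding aux_flow_domain_def by auto
    show "D \<times> UNIV \<subseteq> aux_flow_domain D f (f x0)"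
    proof
      fix p assume "p \<in> D \<times> (UNIV :: real set)"
      then obtain x t where p: "p = (x, t)" and x: "x \<in> D" by auto
      define \<gamma> where "\<gamma> = (\<lambda>\<tau>. g (Psi (f x0) (f x) \<tau>))"
      have "continuous_on UNIV \<gamma>" unfolding \<gamma>_def
        by (rule continuous_on_compose2[OF g4 Psi_cont]) simp
      moreover have "\<gamma> ` UNIV \<subseteq> D" unfolding \<gamma>_def using g3 by auto
      moreover have "\<gamma> 0 = x" unfolding \<gamma>_def using g1 x by simp
      moreover have "\<forall>\<tau>\<in>UNIV. f (\<gamma> \<tau>) = Psi (f x0) (f x) \<tau>" unfolding \<gamma>_def using g2 by simp
      ultimately have "is_lifting D f (Psi (f x0) (f x)) x UNIV \<gamma>"
        unfolding is_lifting_def by simp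
      then show "p \<in> aux_flow_domain D f (f x0)"
        unfolding aux_flow_domain_def p using x by blast
    qed
  qed
next
  assume dom: "aux_flow_domain D f (f x0) = D \<times> UNIV"
  interpret lh D f using assms(1,4) by unfold_locales
  have all: "\<exists>J \<gamma>. is_lifting D f (Psi (f x0) (f x)) x J \<gamma> \<and> t \<in> J" if "x \<in> D" for x t
  proof -
    have "(x, t) \<in> aux_flow_domain D f (f x0)" using dom that by simp
    then show ?thesis unfolding aux_flow_domain_def by simp
  qed
  interpret fl D f "f x0"
    by unfold_locales (rule glue[OF _ all])
  show "\<exists>g. homeomorphism D UNIV f g"
    by (rule homeo[OF assms(2) assms(5) refl])
qed

end
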